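(* Let $G$ be a finite, simple, connected graph with at least $2$ vertices. Then $2 \le \mathrm{mob}(G) \le \mathrm{gp}(G)$. Moreover, for any integers $2 \le a \le b$ there exists a (finite, simple, connected) graph $G$ with $\mathrm{mob}(G) = a$ and $\mathrm{gp}(G) = b$.
   Context: All graphs are finite, simple and connected. A set $S$ of vertices of $G$ is a general position set if no three distinct vertices of $S$ lie on a common shortest path of $G$; $\mathrm{gp}(G)$ is the maximum size of a general position set. Mobile general position sets: place one robot on each vertex of a general position set $S$. Robots move one at a time; a move is legal if a robot moves from its vertex to an adjacent unoccupied vertex and the new set of occupied vertices is again a general position set. $S$ is a mobile general position set if there is a finite sequence of legal moves such that every vertex of $G$ is occupied by some robot at some moment (including the initial configuration). $\mathrm{mob}(G)$ is the maximum cardinality of a mobile general position set of $G$. *)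

theory Defs
  imports Main
begin

definition simple_graph :: "'a set \<Rightarrow> ('a \<Rightarrow> 'a \<Rightarrow> bool) \<Rightarrow> bool" where
  "simple_graph V E \<longleftrightarrow> finite V \<and> V \<noteq> {} \<and>
     (\<forall>x y. E x y \<longrightarrow> x \<in> V \<and> y \<in> V) \<and>
     (\<forall>x y. E x y \<longrightarrow> E y x) \<and> (\<forall>x. \<not> E x x)"

definition walk :: "'a set \<Rightarrow> ('a \<Rightarrow> 'a \<Rightarrow> bool) \<Rightarrow> 'a list \<Rightarrow> bool" where
  "walk V E xs \<longleftrightarrow> xs \<noteq> [] \<and> set xs \<subseteq> V \<and>
     (\<forall>i. Suc i < length xs \<longrightarrow> E (xs ! i) (xs ! Suc i))"

definition connected_graph :: "'a set \<Rightarrow> ('a \<Rightarrow> 'a \<Rightarrow> bool) \<Rightarrow> bool" where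
  "connected_graph V E \<longleftrightarrow>
     (\<forall>u\<in>V. \<forall>v\<in>V. \<exists>xs. walk V E xs \<and> hd xs = u \<and> last xs = v)"

definition dist :: "'a set \<Rightarrow> ('a \<Rightarrow> 'a \<Rightarrow> bool) \<Rightarrow> 'a \<Rightarrow> 'a \<Rightarrow> nat" where
  "dist V E u v = (LEAST n. \<exists>xs. walk V E xs \<and> hd xs = u \<and> last xs = v \<and> length xs = Suc n)"

text \<open>A shortest path: a walk whose number of edges equals the distance of its ends
  (such a walk is automatically a path, i.e. has no repeated vertices).\<close>
definition shortest_path :: "'a set \<Rightarrow> ('a \<Rightarrow> 'a \<Rightarrow> bool) \<Rightarrow> 'a list \<Rightarrow> bool" where
  "shortest_path V E xs \<longleftrightarrow> walk V E xs \<and> length xs = Suc (dist V E (hd xs) (last xs))"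

definition gp_set :: "'a set \<Rightarrow> ('a \<Rightarrow> 'a \<Rightarrow> bool) \<Rightarrow> 'a set \<Rightarrow> bool" where
  "gp_set V E S \<longleftrightarrow> S \<subseteq> V \<and>
     (\<forall>x\<in>S. \<forall>y\<in>S. \<forall>z\<in>S. x \<noteq> y \<and> x \<noteq> z \<and> y \<noteq> z \<longrightarrow>
        \<not> (\<exists>P. shortest_path V E P \<and> x \<in> set P \<and> y \<in> set P \<and> z \<in> set P))"

definition gp :: "'a set \<Rightarrow> ('a \<Rightarrow> 'a \<Rightarrow> bool) \<Rightarrow> nat" where
  "gp V E = Max {card S | S. gp_set V E S}"

definition legal_move :: "'a set \<Rightarrow> ('a \<Rightarrow> 'a \<Rightarrow> bool) \<Rightarrow> 'a set \<Rightarrow> 'a set \<Rightarrow> bool" where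
  "legal_move V E C C' \<longleftrightarrow> (\<exists>u v. u \<in> C \<and> v \<in> V \<and> v \<notin> C \<and> E u v \<and>
       C' = insert v (C - {u}) \<and> gp_set V E C')"

definition mobile_gp_set :: "'a set \<Rightarrow> ('a \<Rightarrow> 'a \<Rightarrow> bool) \<Rightarrow> 'a set \<Rightarrow> bool" where
  "mobile_gp_set V E S \<longleftrightarrow> gp_set V E S \<and>
     (\<exists>cs. cs \<noteq> [] \<and> hd cs = S \<and>
        (\<forall>i. Suc i < length cs \<longrightarrow> legal_move V E (cs ! i) (cs ! Suc i)) \<and>
        V \<subseteq> \<Union> (set cs))"

definition mob :: "'a set \<Rightarrow> ('a \<Rightarrow> 'a \<Rightarrow> bool) \<Rightarrow> nat" where
  "mob V E = Max {card S | S. mobile_gp_set V E S}"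

end

theory Submission
  imports Defs
begin


lemma succ_nth: "successively P xs \<longleftrightarrow> (\<forall>i. Suc i < length xs \<longrightarrow> P (xs!i) (xs!Suc i))"
proof (induction P xs rule: successively.induct)
  case (3 P x y xs)
  show ?case
  proof
    assume h: "successively P (x # y # xs)"
    show "\<forall>i. Suc i < length (x # y # xs) \<longrightarrow> P ((x # y # xs) ! i) ((x # y # xs) ! Suc i)"
    proof (intro allI impI)
      fix i assume "Suc i < length (x # y # xs)"
      then show "P ((x # y # xs) ! i) ((x # y # xs) ! Suc i)" using h 3
        by (cases i) auto
    qed
  next
    assume h: "\<forall>i. Suc i < length (x # y # xs) \<longrightarrow> P ((x # y # xs) ! i) ((x # y # xs) ! Suc i)"
    have "P x y" using h[rule_format, of 0] by simp
    moreover have "\<forall>i. Suc i < length (y # xs) \<longrightarrow> P ((y # xs) ! i) ((y # xs) ! Suc i)"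
      using h[rule_format, of "Suc _"] by auto
    ultimately show "successively P (x # y # xs)" using 3 by simp
  qed
qed auto

lemma rtranclp_list:
  "R\<^sup>*\<^sup>* x y \<Longrightarrow> \<exists>cs. cs \<noteq> [] \<and> hd cs = x \<and> last cs = y \<and> successively R cs"
proof (induction rule: rtranclp_induct)
  case base
  then show ?case by (intro exI[of _ "[x]"]) auto
next
  case (step y z)
  then obtain cs where cs: "cs \<noteq> []" "hd cs = x" "last cs = y" "successively R cs" by blast
  show ?case
    by (intro exI[of _ "cs @ [z]"]) (use cs step in \<open>auto simp: successively_append_iff\<close>)
qed

lemma list_rtranclp:
  "successively R cs \<Longrightarrow> cs \<noteq> [] \<Longrightarrow> R\<^sup>*\<^sup>* (hd cs) (last cs)"
  by (induction R cs rule: successively.induct) auto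

lemma cover_lemma:
  assumes fin: "finite W"
    and sym: "\<And>x y. R x y \<Longrightarrow> R y x"
    and reach: "\<And>w. w \<in> W \<Longrightarrow> \<exists>C. R\<^sup>*\<^sup>* S C \<and> w \<in> C"
  shows "\<exists>cs. cs \<noteq> [] \<and> hd cs = S \<and> successively R cs \<and> W \<subseteq> \<Union>(set cs)"
  using fin reach
proof (induction W rule: finite_induct)
  case empty
  then show ?case by (intro exI[of _ "[S]"]) auto
next
  case (insert w F)
  then obtain cs where cs: "cs \<noteq> []" "hd cs = S" "successively R cs" "F \<subseteq> \<Union>(set cs)"
    by auto
  obtain C where C: "R\<^sup>*\<^sup>* S C" "w \<in> C" using insert.prems by auto
  have "R\<^sup>*\<^sup>* S (last cs)" using list_rtranclp[OF cs(3) cs(1)] cs(2) by simp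
  then have "R\<^sup>*\<^sup>* (last cs) S"
    by (induction rule: rtranclp_induct) (auto intro: sym rtranclp_trans converse_rtranclp_into_rtranclp)
  then have "R\<^sup>*\<^sup>* (last cs) C" using C(1) by auto
  then obtain ds where ds: "ds \<noteq> []" "hd ds = last cs" "last ds = C" "successively R ds"
    using rtranclp_list by metis
  have ds_eq: "ds = last cs # tl ds" using ds by (cases ds) auto
  have "successively R (tl ds) \<and> (tl ds = [] \<or> R (last cs) (hd (tl ds)))"
    using ds(4) ds_eq successively_Cons[of R "last cs" "tl ds"] by auto
  then have "successively R (cs @ tl ds)"
    using cs(3) successively_append_iff[of R cs "tl ds"] by auto
  moreover have "w \<in> \<Union>(set (cs @ tl ds))"
  proof -
    have "C \<in> set (cs @ tl ds)"
    proof (cases "tl ds = []")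
      case True
      then have "C = last cs" using ds ds_eq by (metis last_ConsL)
      then show ?thesis using cs(1) by simp
    next
      case False
      then have "C = last (tl ds)" using ds ds_eq by (metis last_ConsR)
      then show ?thesis using False by simp
    qed
    then show ?thesis using C by auto
  qed
  ultimately show ?case using cs by (intro exI[of _ "cs @ tl ds"]) auto
qed



lemma sg_edge: "simple_graph V E \<Longrightarrow> E x y \<Longrightarrow> x \<in> V \<and> y \<in> V \<and> E y x \<and> x \<noteq> y"
  unfolding simple_graph_def by metis

lemma gp_small:
  assumes "S \<subseteq> V" "finite S" "card S \<le> 2"
  shows "gp_set V E S"
  unfolding gp_set_def
proof (intro conjI ballI impI assms(1))
  fix x y z assume xyz: "x \<in> S" "y \<in> S" "z \<in> S" "x \<noteq> y \<and> x \<noteq> z \<and> y \<noteq> z"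
  have "card {x,y,z} \<le> card S" using xyz assms by (intro card_mono) auto
  then show "\<not> (\<exists>P. shortest_path V E P \<and> x \<in> set P \<and> y \<in> set P \<and> z \<in> set P)"
    using xyz assms by auto
qed

definition RR where "RR V E C C' \<longleftrightarrow> legal_move V E C C' \<and> gp_set V E C"

lemma RR_sym:
  assumes sg: "simple_graph V E" and r: "RR V E C C'"
  shows "RR V E C' C"
proof -
  obtain u v where uv: "u \<in> C" "v \<in> V" "v \<notin> C" "E u v" "C' = insert v (C - {u})" "gp_set V E C'"
    and gC: "gp_set V E C"
    using r unfolding RR_def legal_move_def by blast
  have e: "u \<in> V" "E v u" "u \<noteq> v" using sg_edge[OF sg uv(4)] by auto
  have "C = insert u (C' - {v})" using uv e by auto
  moreover have "v \<in> C'" "u \<notin> C'" using uv e by auto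
  ultimately show ?thesis unfolding RR_def legal_move_def using uv gC e by blast
qed

lemma reach_walk:
  assumes sg: "simple_graph V E" and st: "s \<noteq> t" "s \<in> V" "t \<in> V"
    and w: "walk V E xs" "hd xs = s"
  shows "i < length xs \<Longrightarrow> \<exists>C q. (RR V E)\<^sup>*\<^sup>* {s,t} C \<and> C = {xs!i, q} \<and> q \<noteq> xs!i \<and> q \<in> V"
proof (induction i)
  case 0
  have "xs ! 0 = s" using w by (cases xs) (auto simp: walk_def)
  then show ?case using st by auto
next
  case (Suc i)
  then obtain C q where C: "(RR V E)\<^sup>*\<^sup>* {s,t} C" "C = {xs!i, q}" "q \<noteq> xs!i" "q \<in> V" by auto
  have ed: "E (xs!i) (xs!Suc i)" using w Suc.prems unfolding walk_def by auto
  note e = sg_edge[OF sg ed]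
  show ?case
  proof (cases "q = xs ! Suc i")
    case True
    then show ?thesis using C e by (intro exI[of _ C] exI[of _ "xs!i"]) auto
  next
    case False
    let ?C' = "{xs ! Suc i, q}"
    have eqC: "?C' = insert (xs ! Suc i) (C - {xs!i})" using C False e by auto
    have "gp_set V E ?C'" by (rule gp_small) (use C e in \<open>auto simp: card_insert_if\<close>)
    moreover have "xs ! Suc i \<notin> C" using C e False by auto
    ultimately have "legal_move V E C ?C'" unfolding legal_move_def
      using C e ed eqC by blast
    moreover have "gp_set V E C" by (rule gp_small) (use C e in \<open>auto simp: card_insert_if\<close>)
    ultimately have "RR V E C ?C'" unfolding RR_def by auto
    then have "(RR V E)\<^sup>*\<^sup>* {s,t} ?C'" using C(1) by auto
    then show ?thesis using False C by auto
  qed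
qed

lemma finite_cards:
  assumes "finite V" "\<And>S. P S \<Longrightarrow> S \<subseteq> V"
  shows "finite {card S | S. P S}"
proof -
  have "{card S | S. P S} \<subseteq> {..card V}"
  proof
    fix n assume "n \<in> {card S | S. P S}"
    then obtain S where "n = card S" "P S" by blast
    then show "n \<in> {..card V}" using card_mono[OF assms(1) assms(2)] by auto
  qed
  then show ?thesis using finite_subset by blast
qed

lemma part1:
  assumes sg: "simple_graph V E" and cg: "connected_graph V E" and c2: "card V \<ge> 2"
  shows "2 \<le> mob V E \<and> mob V E \<le> gp V E"
proof -
  have finV: "finite V" using sg unfolding simple_graph_def by auto
  obtain s t where st: "s \<in> V" "t \<in> V" "s \<noteq> t"
  proof -
    have "V \<noteq> {}" using c2 by auto
    then obtain s where s: "s \<in> V" by blast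
    have "card (V - {s}) \<ge> 1" using c2 s finV by simp
    then have "V - {s} \<noteq> {}" by (metis card.empty not_one_le_zero)
    then obtain t where "t \<in> V - {s}" by blast
    then show ?thesis using that s by blast
  qed
  let ?S = "{s,t}"
  have reach: "\<exists>C. (RR V E)\<^sup>*\<^sup>* ?S C \<and> w \<in> C" if wV: "w \<in> V" for w
  proof -
    obtain xs where xs: "walk V E xs" "hd xs = s" "last xs = w"
      using cg[unfolded connected_graph_def, rule_format, OF st(1) wV] by blast
    have ne: "xs \<noteq> []" using xs unfolding walk_def by auto
    have "last xs = xs ! (length xs - 1)" using ne by (simp add: last_conv_nth)
    moreover have "length xs - 1 < length xs" using ne by simp
    ultimately show ?thesis using reach_walk[OF sg st(3) st(1) st(2) xs(1) xs(2), of "length xs - 1"] xs(3)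
      by blast
  qed
  obtain cs where cs: "cs \<noteq> []" "hd cs = ?S" "successively (RR V E) cs" "V \<subseteq> \<Union>(set cs)"
    using cover_lemma[OF finV, of "RR V E" ?S, OF RR_sym[OF sg] reach] by blast
  have "gp_set V E ?S" by (rule gp_small) (use st in \<open>auto simp: card_insert_if\<close>)
  moreover have "\<forall>i. Suc i < length cs \<longrightarrow> legal_move V E (cs ! i) (cs ! Suc i)"
    using cs(3) unfolding succ_nth RR_def by blast
  ultimately have "mobile_gp_set V E ?S" unfolding mobile_gp_set_def
    using cs by blast
  have mobsub: "\<And>S. mobile_gp_set V E S \<Longrightarrow> S \<subseteq> V" unfolding mobile_gp_set_def gp_set_def by blast
  have gpsub: "\<And>S. gp_set V E S \<Longrightarrow> S \<subseteq> V" unfolding gp_set_def by blast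
  have f1: "finite {card S | S. mobile_gp_set V E S}" using finite_cards[OF finV mobsub] .
  have f2: "finite {card S | S. gp_set V E S}" using finite_cards[OF finV gpsub] .
  have m2: "2 \<in> {card S | S. mobile_gp_set V E S}" 
  proof -
    have "card ?S = 2" using st by simp
    then show ?thesis using \<open>mobile_gp_set V E ?S\<close> by (metis (mono_tags, lifting) mem_Collect_eq)
  qed
  have "2 \<le> mob V E" unfolding mob_def using Max_ge[OF f1 m2] .
  moreover have "mob V E \<le> gp V E" unfolding mob_def gp_def
  proof (rule Max_mono)
    show "{card S |S. mobile_gp_set V E S} \<subseteq> {card S |S. gp_set V E S}"
      unfolding mobile_gp_set_def by blast
  qed (use f2 m2 in auto)
  ultimately show ?thesis by auto
qed



lemma dist_le_walk:
  assumes "walk V E xs"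
  shows "dist V E (hd xs) (last xs) \<le> length xs - 1"
proof -
  have "xs \<noteq> []" using assms unfolding walk_def by auto
  then have "\<exists>ys. walk V E ys \<and> hd ys = hd xs \<and> last ys = last xs \<and> length ys = Suc (length xs - 1)"
    using assms by (intro exI[of _ xs]) auto
  then show ?thesis unfolding dist_def by (rule Least_le)
qed

lemma dist_ex:
  assumes "walk V E xs" "hd xs = u" "last xs = v"
  shows "\<exists>ys. walk V E ys \<and> hd ys = u \<and> last ys = v \<and> length ys = Suc (dist V E u v)"
proof -
  have "xs \<noteq> []" using assms unfolding walk_def by auto
  then have "\<exists>n ys. walk V E ys \<and> hd ys = u \<and> last ys = v \<and> length ys = Suc n"
    using assms by (intro exI[of _ "length xs - 1"] exI[of _ xs]) auto
  then show ?thesis unfolding dist_def by (rule LeastI_ex)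
qed

lemma walk1: "x \<in> V \<Longrightarrow> walk V E [x]"
  unfolding walk_def by auto

lemma walk2: "simple_graph V E \<Longrightarrow> E x y \<Longrightarrow> walk V E [x,y]"
  unfolding walk_def using sg_edge[of V E x y] by (auto simp: less_Suc_eq nth_Cons split: nat.splits)

lemma walk3: "simple_graph V E \<Longrightarrow> E x y \<Longrightarrow> E y z \<Longrightarrow> walk V E [x,y,z]"
  unfolding walk_def using sg_edge[of V E x y] sg_edge[of V E y z]
  by (auto simp: less_Suc_eq nth_Cons split: nat.splits)

lemma walk_ends: "walk V E xs \<Longrightarrow> hd xs \<in> V \<and> last xs \<in> V"
  unfolding walk_def by auto

locale univ =
  fixes V E c
  assumes sg: "simple_graph V E" and cV: "c \<in> V" and cu: "\<And>v. v \<in> V \<Longrightarrow> v \<noteq> c \<Longrightarrow> E c v"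
begin

lemma dist_le2:
  assumes "u \<in> V" "v \<in> V"
  shows "dist V E u v \<le> 2"
proof -
  have e: "E v c" if "v \<in> V" "v \<noteq> c" for v using cu[OF that] sg_edge[OF sg] by blast
  consider "u = v" | "u \<noteq> v" "u = c" | "u \<noteq> v" "v = c" | "u \<noteq> c" "v \<noteq> c" by blast
  then show ?thesis
  proof cases
    case 1 then show ?thesis using dist_le_walk[OF walk1[OF assms(1)]] by simp
  next
    case 2 then show ?thesis using dist_le_walk[OF walk2[OF sg cu[OF assms(2)]]] by simp
  next
    case 3 then show ?thesis using dist_le_walk[OF walk2[OF sg e[OF assms(1)]]] by simp
  next
    case 4 then show ?thesis using dist_le_walk[OF walk3[OF sg e[OF assms(1)] cu[OF assms(2)]]] by simp
  qed
qed

lemma sp3: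
  assumes sp: "shortest_path V E P" and xyz: "x \<in> set P" "y \<in> set P" "z \<in> set P"
    "x \<noteq> y" "x \<noteq> z" "y \<noteq> z"
  shows "\<exists>p0 p1 p2. P = [p0,p1,p2] \<and> E p0 p1 \<and> E p1 p2 \<and> p0 \<noteq> p2 \<and> \<not> E p0 p2"
proof -
  have w: "walk V E P" and len: "length P = Suc (dist V E (hd P) (last P))"
    using sp unfolding shortest_path_def by auto
  have "card {x,y,z} \<le> card (set P)" by (rule card_mono) (use xyz in auto)
  also have "\<dots> \<le> length P" by (rule card_length)
  finally have "3 \<le> length P" using xyz by simp
  moreover have "dist V E (hd P) (last P) \<le> 2" using dist_le2 walk_ends[OF w] by blast
  then have "length P \<le> 3" using len by simp
  ultimately have l3: "length P = 3" by simp
  then obtain p0 p1 p2 where P: "P = [p0,p1,p2]"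
    using l3 unfolding numeral_3_eq_3 length_Suc_conv length_0_conv by blast
  have d: "dist V E p0 p2 = 2" using len P by simp
  have wa: "\<forall>i. Suc i < length P \<longrightarrow> E (P!i) (P!Suc i)" using w unfolding walk_def by blast
  have e01: "E p0 p1" using wa[rule_format, of 0] P by simp
  have e12: "E p1 p2" using wa[rule_format, of 1] P by simp
  have "p0 \<noteq> p2"
  proof
    assume "p0 = p2"
    then show False using dist_le_walk[OF walk1[of p0 V E]] d walk_ends[OF w] P by simp
  qed
  moreover have "\<not> E p0 p2"
  proof
    assume "E p0 p2"
    then show False using dist_le_walk[OF walk2[OF sg, of p0 p2]] d by simp
  qed
  ultimately show ?thesis using P e01 e12 by blast
qed

end

lemma sp_P3:
  assumes sg: "simple_graph V E" and e: "E p0 p1" "E p1 p2" "p0 \<noteq> p2" "\<not> E p0 p2"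
  shows "shortest_path V E [p0,p1,p2]"
proof -
  have w: "walk V E [p0,p1,p2]" using walk3[OF sg e(1,2)] .
  have le: "dist V E p0 p2 \<le> 2" using dist_le_walk[OF w] by simp
  obtain ys where ys: "walk V E ys" "hd ys = p0" "last ys = p2" "length ys = Suc (dist V E p0 p2)"
    using dist_ex[OF w] by auto
  have "dist V E p0 p2 \<noteq> 0"
  proof
    assume "dist V E p0 p2 = 0"
    then obtain a where "ys = [a]" using ys(4) by (cases ys) auto
    then show False using ys e by simp
  qed
  moreover have "dist V E p0 p2 \<noteq> 1"
  proof
    assume "dist V E p0 p2 = 1"
    then obtain a b where "ys = [a,b]" using ys(4)
      by (metis One_nat_def Suc_length_conv length_0_conv)
    moreover have "E (ys!0) (ys!1)" using ys(1) \<open>dist V E p0 p2 = 1\<close> ys(4) unfolding walk_def by auto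
    ultimately show False using ys e by simp
  qed
  ultimately have "dist V E p0 p2 = 2" using le by linarith
  then show ?thesis unfolding shortest_path_def using w by simp
qed

lemma gp_dest:
  assumes sg: "simple_graph V E" and g: "gp_set V E S" and ins: "u \<in> S" "v \<in> S" "w \<in> S"
    and e: "E u v" "E v w" "u \<noteq> w" "\<not> E u w"
  shows False
proof -
  have "u \<noteq> v" "v \<noteq> w" using sg_edge[OF sg e(1)] sg_edge[OF sg e(2)] by auto
  then show False using g ins e sp_P3[OF sg e] unfolding gp_set_def
    by (metis list.set_intros(1) list.set_intros(2) set_ConsD)
qed

lemma (in univ) gp_intro:
  assumes "S \<subseteq> V" and h: "\<And>u v w. u \<in> S \<Longrightarrow> v \<in> S \<Longrightarrow> w \<in> S \<Longrightarrow> E u v \<Longrightarrow> E v w \<Longrightarrow> u \<noteq> w \<Longrightarrow> E u w"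
  shows "gp_set V E S"
  unfolding gp_set_def
proof (intro conjI assms(1) ballI impI notI)
  fix x y z assume xyz: "x \<in> S" "y \<in> S" "z \<in> S" "x \<noteq> y \<and> x \<noteq> z \<and> y \<noteq> z"
    and "\<exists>P. shortest_path V E P \<and> x \<in> set P \<and> y \<in> set P \<and> z \<in> set P"
  then obtain P where P: "shortest_path V E P" "x \<in> set P" "y \<in> set P" "z \<in> set P" by blast
  obtain p0 p1 p2 where p: "P = [p0,p1,p2]" "E p0 p1" "E p1 p2" "p0 \<noteq> p2" "\<not> E p0 p2"
    using sp3[OF P] xyz by blast
  have "p0 \<in> {x,y,z}" "p1 \<in> {x,y,z}" "p2 \<in> {x,y,z}" using P(2-4) xyz p(1) by auto
  then have "p0 \<in> S" "p1 \<in> S" "p2 \<in> S" using xyz by auto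
  then show False using h p by blast
qed



lemma (in univ) conn: "connected_graph V E"
  unfolding connected_graph_def
proof (intro ballI)
  fix u v assume u: "u \<in> V" and v: "v \<in> V"
  have e: "E x c" if "x \<in> V" "x \<noteq> c" for x using cu[OF that] sg_edge[OF sg] by blast
  consider "u = v" | "u \<noteq> v" "u = c" | "u \<noteq> v" "v = c" | "u \<noteq> c" "v \<noteq> c" by blast
  then show "\<exists>xs. walk V E xs \<and> hd xs = u \<and> last xs = v"
  proof cases
    case 1 then show ?thesis using walk1[OF u] by (intro exI[of _ "[u]"]) auto
  next
    case 2 then show ?thesis using walk2[OF sg cu[OF v]] by (intro exI[of _ "[c,v]"]) auto
  next
    case 3 then show ?thesis using walk2[OF sg e[OF u]] by (intro exI[of _ "[u,c]"]) auto
  next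
    case 4 then show ?thesis using walk3[OF sg e[OF u] cu[OF v]] by (intro exI[of _ "[u,c,v]"]) auto
  qed
qed

definition GE :: "nat \<Rightarrow> nat \<Rightarrow> nat \<Rightarrow> nat \<Rightarrow> bool" where
  "GE a b x y \<longleftrightarrow> x \<noteq> y \<and> x \<le> b \<and> y \<le> b \<and> ((x < a \<and> y < a) \<or> x = 0 \<or> y = 0)"

lemma sgG: "simple_graph {0..b} (GE a b)"
  unfolding simple_graph_def GE_def by auto

lemma univG: "univ {0..b} (GE a b) 0"
  unfolding univ_def using sgG by (auto simp: GE_def)

lemma P3G: "GE a b u v \<Longrightarrow> GE a b v w \<Longrightarrow> u \<noteq> w \<Longrightarrow> \<not> GE a b u w \<Longrightarrow>
  v = 0 \<and> u \<noteq> 0 \<and> w \<noteq> 0 \<and> (a \<le> u \<or> a \<le> w)"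
  unfolding GE_def by auto

lemma gp_intro_G:
  assumes "S \<subseteq> {0..b}" "\<And>u v w. u \<in> S \<Longrightarrow> v \<in> S \<Longrightarrow> w \<in> S \<Longrightarrow> v = 0 \<Longrightarrow> u \<noteq> 0 \<Longrightarrow> w \<noteq> 0 \<Longrightarrow> u \<noteq> w \<Longrightarrow> a \<le> u \<or> a \<le> w \<Longrightarrow> False"
  shows "gp_set {0..b} (GE a b) S"
  apply (rule univ.gp_intro[OF univG assms(1)])
  using P3G assms(2) by metis

lemma card0:
  assumes ab: "2 \<le> a" and g: "gp_set {0..b} (GE a b) S" and z: "0 \<in> S"
  shows "card S \<le> a"
proof -
  have sub: "S \<subseteq> {0..b}" using g unfolding gp_set_def by blast
  have fin: "finite S" using sub finite_subset by blast
  show ?thesis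
  proof (cases "\<exists>u\<in>S. a \<le> u")
    case True
    then obtain u where u: "u \<in> S" "a \<le> u" by blast
    have "S \<subseteq> {0,u}"
    proof
      fix w assume w: "w \<in> S"
      show "w \<in> {0,u}"
      proof (rule ccontr)
        assume "w \<notin> {0,u}"
        moreover have "u \<le> b" "w \<le> b" using sub u w by auto
        ultimately have "GE a b u 0" "GE a b 0 w" "\<not> GE a b u w" using u ab unfolding GE_def by auto
        then show False using gp_dest[OF sgG g u(1) z w] \<open>w \<notin> {0,u}\<close> by auto
      qed
    qed
    then have "card S \<le> card {0,u}" by (intro card_mono) auto
    also have "\<dots> \<le> 2" by (simp add: card_insert_if)
    finally show ?thesis using ab by simp
  next
    case False
    then have "S \<subseteq> {0..<a}" by auto
    then have "card S \<le> card {0..<a}" by (intro card_mono) auto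
    then show ?thesis by simp
  qed
qed

lemma gpG:
  assumes ab: "2 \<le> a" "a \<le> b"
  shows "gp {0..b} (GE a b) = b"
  unfolding gp_def
proof (rule Max_eqI)
  show "finite {card S |S. gp_set {0..b} (GE a b) S}"
    by (rule finite_cards[of "{0..b}"]) (auto simp: gp_set_def)
next
  fix y assume "y \<in> {card S |S. gp_set {0..b} (GE a b) S}"
  then obtain S where S: "y = card S" "gp_set {0..b} (GE a b) S" by blast
  show "y \<le> b"
  proof (cases "0 \<in> S")
    case True then show ?thesis using card0[OF ab(1) S(2)] S ab by simp
  next
    case False
    have "S \<subseteq> {0..b}" using S unfolding gp_set_def by blast
    have "S \<subseteq> {1..b}"
    proof
      fix x assume x: "x \<in> S"
      have "x \<le> b" using \<open>S \<subseteq> {0..b}\<close> x by auto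
      moreover have "x \<noteq> 0" using x False by metis
      ultimately show "x \<in> {1..b}" by simp
    qed
    then have "card S \<le> card {1..b}" by (intro card_mono) auto
    then show ?thesis using S by simp
  qed
next
  have "gp_set {0..b} (GE a b) {1..b}" by (rule gp_intro_G) auto
  moreover have "card {1..b} = b" by simp
  ultimately show "b \<in> {card S |S. gp_set {0..b} (GE a b) S}" by (metis (mono_tags, lifting) mem_Collect_eq)
qed



lemma chain_inv:
  assumes finV: "finite V" and gS: "gp_set V E S" and ne: "cs \<noteq> []" and h: "hd cs = S"
    and ch: "\<forall>i. Suc i < length cs \<longrightarrow> legal_move V E (cs!i) (cs!Suc i)"
  shows "i < length cs \<Longrightarrow> gp_set V E (cs!i) \<and> card (cs!i) = card S"
proof (induction i)
  case 0
  then show ?case using gS ne h by (simp add: hd_conv_nth)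
next
  case (Suc i)
  then have IH: "gp_set V E (cs!i)" "card (cs!i) = card S" by auto
  obtain u v where uv: "u \<in> cs!i" "v \<notin> cs!i" "cs!Suc i = insert v (cs!i - {u})" "gp_set V E (cs!Suc i)"
    using ch Suc.prems unfolding legal_move_def by blast
  have fin: "finite (cs!i)" using IH(1) finV finite_subset unfolding gp_set_def by blast
  have "card (cs!Suc i) = Suc (card (cs!i - {u}))" using uv fin by simp
  also have "\<dots> = card (cs!i)" using uv(1) fin
    by (metis card_Suc_Diff1)
  finally show ?case using IH uv by simp
qed

lemma mobG:
  assumes ab: "2 \<le> a" "a \<le> b"
  shows "mob {0..b} (GE a b) = a"
  unfolding mob_def
proof (rule Max_eqI)
  show "finite {card S |S. mobile_gp_set {0..b} (GE a b) S}"
    by (rule finite_cards[of "{0..b}"]) (auto simp: gp_set_def mobile_gp_set_def)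
next
  fix y assume "y \<in> {card S |S. mobile_gp_set {0..b} (GE a b) S}"
  then obtain S where S: "y = card S" "mobile_gp_set {0..b} (GE a b) S" by blast
  then obtain cs where cs: "gp_set {0..b} (GE a b) S" "cs \<noteq> []" "hd cs = S"
     "\<forall>i. Suc i < length cs \<longrightarrow> legal_move {0..b} (GE a b) (cs!i) (cs!Suc i)"
     "{0..b} \<subseteq> \<Union>(set cs)"
    unfolding mobile_gp_set_def by blast
  have "(0::nat) \<in> \<Union>(set cs)" using cs(5) by auto
  then obtain C where C: "C \<in> set cs" "0 \<in> C" by blast
  then obtain i where i: "i < length cs" "C = cs!i" by (metis in_set_conv_nth)
  have "gp_set {0..b} (GE a b) C \<and> card C = card S"
    using chain_inv[OF _ cs(1-4) i(1)] i(2) by simp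
  then show "y \<le> a" using card0[OF ab(1) _ C(2)] S(1) by auto
next
  define K where "K = {0..<a}"
  define f where "f i = (if even i then K else insert (a + i div 2) (K - {0}))" for i :: nat
  define cs where "cs = map f [0..<2*(b-a)+3]"
  have gK: "gp_set {0..b} (GE a b) K"
    by (rule gp_intro_G) (use ab in \<open>auto simp: K_def\<close>)
  have gL: "gp_set {0..b} (GE a b) (insert l (K - {0}))" if "l \<le> b" for l
    by (rule gp_intro_G) (use ab that in \<open>auto simp: K_def\<close>)
  have lm: "legal_move {0..b} (GE a b) (f i) (f (Suc i))" if "Suc i < length cs" for i
  proof -
    have il: "i \<le> 2*(b-a)+1" using that by (simp add: cs_def)
    have lb: "a + i div 2 \<le> b" using il ab by linarith
    show ?thesis
    proof (cases "even i")
      case True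
      have "f (Suc i) = insert (a + i div 2) (K - {0})" using True by (simp add: f_def)
      moreover have "f i = K" using True by (simp add: f_def)
      moreover have "GE a b 0 (a + i div 2)" using lb ab by (simp add: GE_def)
      moreover have "(0::nat) \<in> K" "a + i div 2 \<notin> K" using ab by (auto simp: K_def)
      ultimately show ?thesis unfolding legal_move_def using gL[OF lb] lb by fastforce
    next
      case False
      have fi: "f i = insert (a + i div 2) (K - {0})" using False by (simp add: f_def)
      moreover have "f (Suc i) = K" using False by (simp add: f_def)
      moreover have "GE a b (a + i div 2) 0" using lb ab by (simp add: GE_def)
      moreover have "K = insert 0 (insert (a + i div 2) (K - {0}) - {a + i div 2})"
        using ab by (auto simp: K_def)
      moreover have "a + i div 2 \<in> f i" "(0::nat) \<notin> f i" using fi ab by (auto simp: K_def)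
      ultimately show ?thesis unfolding legal_move_def using gK by (metis atLeastAtMost_iff le0)
    qed
  qed
  have "mobile_gp_set {0..b} (GE a b) K"
    unfolding mobile_gp_set_def
  proof (intro conjI gK exI[of _ cs])
    show "cs \<noteq> []" by (simp add: cs_def)
    show "hd cs = K" by (simp add: cs_def f_def hd_map upt_rec)
    show "\<forall>i. Suc i < length cs \<longrightarrow> legal_move {0..b} (GE a b) (cs ! i) (cs ! Suc i)"
      using lm by (simp add: cs_def nth_map)
    show "{0..b} \<subseteq> \<Union> (set cs)"
    proof
      fix v assume v: "v \<in> {0..b}"
      show "v \<in> \<Union> (set cs)"
      proof (cases "v < a")
        case True
        have "f 0 \<in> set cs" by (simp add: cs_def)
        moreover have "v \<in> f 0" using True by (simp add: f_def K_def)
        ultimately show ?thesis by blast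
      next
        case False
        define j where "j = 2*(v-a)+1"
        have "j < 2*(b-a)+3" using v False by (simp add: j_def)
        then have "f j \<in> set cs" by (simp add: cs_def)
        moreover have "f j = insert v (K - {0})" using False by (simp add: f_def j_def)
        ultimately show ?thesis by auto
      qed
    qed
  qed
  moreover have "card K = a" by (simp add: K_def)
  ultimately show "a \<in> {card S |S. mobile_gp_set {0..b} (GE a b) S}"
    by (metis (mono_tags, lifting) mem_Collect_eq)
qed


theorem lemma1p1:
  shows "(\<forall>(V :: 'a set) E. simple_graph V E \<and> connected_graph V E \<and> card V \<ge> 2 \<longrightarrow>
            2 \<le> mob V E \<and> mob V E \<le> gp V E)
       \<and> (\<forall>a b :: nat. 2 \<le> a \<and> a \<le> b \<longrightarrow>
            (\<exists>(V :: nat set) E. simple_graph V E \<and> connected_graph V E \<and>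
               mob V E = a \<and> gp V E = b))"
proof (rule conjI; intro allI impI)
  fix V :: "'a set" and E
  assume "simple_graph V E \<and> connected_graph V E \<and> card V \<ge> 2"
  then show "2 \<le> mob V E \<and> mob V E \<le> gp V E" using part1 by blast
next
  fix a b :: nat assume ab: "2 \<le> a \<and> a \<le> b"
  show "\<exists>(V :: nat set) E. simple_graph V E \<and> connected_graph V E \<and> mob V E = a \<and> gp V E = b"
    using sgG univ.conn[OF univG] mobG gpG ab by blast
qed

end
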